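(* For $a\in\mathcal{A}'$ write $\overline{a}=a+\mathrm{II}\in\mathcal{A}'/\mathrm{II}$. Then for all $a\in\mathcal{A}'$, all $i,j\in\{1,\dots,n\}$ and every rational function $\phi(t)$ with $\phi(H)\in\mathcal{A}'$: \begin{align*} \overline{a}\diamond\overline{\partial_j}&=\overline{a\partial_j}, & \overline{x^i}\diamond\overline{a}&=\overline{x^ia},\\ \overline{\partial_i}\diamond\overline{\gamma^j}&=\overline{\partial_i\gamma^j-\varphi_1(H-1)\gamma_i\partial^j}, & \overline{\gamma^i}\diamond\overline{\gamma^j}&=\overline{\gamma^i\gamma^j-2\varphi_1(H)x^i\partial^j},\\ \overline{\partial_i}\diamond\overline{x^j}&=\overline{\partial_ix^j-\tfrac{\varphi_1(H-1)}{2}\gamma_i\gamma^j+\varphi_2(H-1)x_i\partial^j}, & \overline{\gamma^i}\diamond\overline{x^j}&=\overline{\gamma^ix^j-\varphi_1(H)x^i\gamma^j},\\ \overline{\phi(H)}\diamond\overline{a}&=\overline{\phi(H)a}, & \overline{a}\diamond\overline{\phi(H)}&=\overline{a\phi(H)}. \end{align*}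
   Context: Fix $n\ge1$ and an invertible complex matrix $\eta=(\eta^{ij})$ with $\eta^{ij}=\eta^{ji}$ and inverse $(\eta_{ij})$. $\mathcal{A}=W(2n|n)$ is the associative superalgebra generated by even $x^1,\dots,x^n,\partial_1,\dots,\partial_n$ and odd $\gamma^1,\dots,\gamma^n$ with relations $x^ix^j=x^jx^i$, $\partial_i\partial_j=\partial_j\partial_i$, $\partial_ix^j-x^j\partial_i=\delta_i^j$, $\gamma^i$ commuting with all $x^j,\partial_j$, $\gamma^i\gamma^j+\gamma^j\gamma^i=2\eta^{ij}$. Repeated indices are summed; $x_i=\eta_{ij}x^j$, $\partial^i=\eta^{ij}\partial_j$, $\gamma_i=\eta_{ij}\gamma^j$. Set $X=\frac{\sqrt{-1}}{\sqrt2}\gamma^i\partial_i$, $Y=\frac{\sqrt{-1}}{\sqrt2}\gamma^ix_i$, $H=-\frac12(\partial_ix^i+x^i\partial_i)$, $E=-\frac12\partial^i\partial_i$, $F=\frac12x^ix_i$. Let $\mathcal{A}'$ be the localization of $\mathcal{A}$ at the multiplicative set generated by $\{H+k:k\in\mathbb{Z}\}$, and $\mathrm{II}:=Y\mathcal{A}'+F\mathcal{A}'+\mathcal{A}'X+\mathcal{A}'E$. Define $\kappa_k(t)=-k/2$ for $k$ even and $\kappa_k(t)=t+\frac{k+1}{2}$ for $k$ odd, and $\varphi_n(t)=\prod_{k=1}^n\frac{(-1)^k}{\kappa_k(t)}$ (so $\varphi_0=1$, $\varphi_1(t)=-\frac1{t+1}$, $\varphi_2(t)=\frac1{t+1}$).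 The diamond product on $\mathcal{A}'/\mathrm{II}$ is $\overline a\diamond\overline b:=\sum_{k\ge0}a\,\varphi_k(H)Y^kX^k\,b+\mathrm{II}$, where all but finitely many summands lie in $\mathrm{II}$ (as $X$ acts locally nilpotently). *)

theory Defs
  imports Complex_Main
begin

text \<open>
  Data of a (candidate) realisation of the localised Weyl--Clifford superalgebra
  A' = W(2n|n) localised at the multiplicative set generated by the H+k.
  Indices run over 0..n-1 (shift of the paper's 1..n).
  xv i = x^i, dv i = d_i (partial), gv i = gamma^i, sc = the complex scalars,
  hinv k = (H+k)^(-1).
\<close>

record 'a WC =
  dim  :: nat
  eta  :: "nat \<Rightarrow> nat \<Rightarrow> complex"
  etai :: "nat \<Rightarrow> nat \<Rightarrow> complex"   (* eta_{ij}, the inverse matrix *)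
  xv   :: "nat \<Rightarrow> 'a"
  dv   :: "nat \<Rightarrow> 'a"
  gv   :: "nat \<Rightarrow> 'a"
  sc   :: "complex \<Rightarrow> 'a"
  hinv :: "int \<Rightarrow> 'a"

context
  fixes W :: "('a::ring_1, 'b) WC_scheme"
begin

definition xlow :: "nat \<Rightarrow> 'a" where
  "xlow i = (\<Sum>j<dim W. sc W (etai W i j) * xv W j)"

definition glow :: "nat \<Rightarrow> 'a" where
  "glow i = (\<Sum>j<dim W. sc W (etai W i j) * gv W j)"

definition dup :: "nat \<Rightarrow> 'a" where
  "dup i = (\<Sum>j<dim W. sc W (eta W i j) * dv W j)"

definition Xop :: 'a where
  "Xop = sc W (\<i> / complex_of_real (sqrt 2)) * (\<Sum>i<dim W. gv W i * dv W i)"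

definition Yop :: 'a where
  "Yop = sc W (\<i> / complex_of_real (sqrt 2)) * (\<Sum>i<dim W. gv W i * xlow i)"

definition Hop :: 'a where
  "Hop = sc W (- 1/2) * (\<Sum>i<dim W. dv W i * xv W i + xv W i * dv W i)"

definition Eop :: 'a where
  "Eop = sc W (- 1/2) * (\<Sum>i<dim W. dup i * dv W i)"

definition Fop :: 'a where
  "Fop = sc W (1/2) * (\<Sum>i<dim W. xv W i * xlow i)"

text \<open>W realises the defining relations of A' (a complex algebra: sc is a ring
  homomorphism from the complex numbers into the centre).\<close>
definition WC_alg :: bool where
  "WC_alg \<longleftrightarrow>
     (\<forall>a b. sc W (a + b) = sc W a + sc W b) \<and>
     (\<forall>a b. sc W (a * b) = sc W a * sc W b) \<and>
     sc W 1 = 1 \<and>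
     (\<forall>c r. sc W c * r = r * sc W c) \<and>
     (\<forall>i<dim W. \<forall>j<dim W.
        xv W i * xv W j = xv W j * xv W i \<and>
        dv W i * dv W j = dv W j * dv W i \<and>
        dv W i * xv W j - xv W j * dv W i = (if i = j then 1 else 0) \<and>
        gv W i * xv W j = xv W j * gv W i \<and>
        gv W i * dv W j = dv W j * gv W i \<and>
        gv W i * gv W j + gv W j * gv W i = sc W (2 * eta W i j)) \<and>
     (\<forall>k::int. (Hop + of_int k) * hinv W k = 1 \<and> hinv W k * (Hop + of_int k) = 1)"

text \<open>The subalgebra generated by the generators and the inverses (H+k)^(-1),
  i.e. the image of A'.\<close>
inductive_set Agen :: "'a set" where
  gen_x: "i < dim W \<Longrightarrow> xv W i \<in> Agen"
| gen_d: "i < dim W \<Longrightarrow> dv W i \<in> Agen"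
| gen_g: "i < dim W \<Longrightarrow> gv W i \<in> Agen"
| gen_sc: "sc W c \<in> Agen"
| gen_hinv: "hinv W k \<in> Agen"
| gen_add: "a \<in> Agen \<Longrightarrow> b \<in> Agen \<Longrightarrow> a + b \<in> Agen"
| gen_mult: "a \<in> Agen \<Longrightarrow> b \<in> Agen \<Longrightarrow> a * b \<in> Agen"

text \<open>Elements phi(H) of A' with phi a rational function: the subalgebra generated
  by the scalars, H and the (H+k)^(-1), k integer.\<close>
inductive_set HRat :: "'a set" where
  hr_sc: "sc W c \<in> HRat"
| hr_H: "Hop \<in> HRat"
| hr_hinv: "hinv W k \<in> HRat"
| hr_add: "a \<in> HRat \<Longrightarrow> b \<in> HRat \<Longrightarrow> a + b \<in> HRat"
| hr_mult: "a \<in> HRat \<Longrightarrow> b \<in> HRat \<Longrightarrow> a * b \<in> HRat"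

definition II :: "'a set" where
  "II = {Yop * r1 + Fop * r2 + r3 * Xop + r4 * Eop | r1 r2 r3 r4.
           r1 \<in> Agen \<and> r2 \<in> Agen \<and> r3 \<in> Agen \<and> r4 \<in> Agen}"

text \<open>kinv m s = kappa_m(H+s)^(-1).\<close>
definition kinv :: "nat \<Rightarrow> int \<Rightarrow> 'a" where
  "kinv m s = (if even m then sc W (- 2 / of_nat m) else hinv W (int ((m + 1) div 2) + s))"

text \<open>phiH k s = varphi_k(H+s).\<close>
fun phiH :: "nat \<Rightarrow> int \<Rightarrow> 'a" where
  "phiH 0 s = 1"
| "phiH (Suc k) s = phiH k s * sc W ((-1) ^ Suc k) * kinv (Suc k) s"

definition dsummand :: "'a \<Rightarrow> 'a \<Rightarrow> nat \<Rightarrow> 'a" where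
  "dsummand a b k = a * phiH k 0 * Yop ^ k * Xop ^ k * b"

text \<open>(a + II) diamond (b + II) = c + II: all but finitely many summands lie in II
  and the (finite) sum of the remaining ones is congruent to c modulo II.\<close>
definition diamond_eq :: "'a \<Rightarrow> 'a \<Rightarrow> 'a \<Rightarrow> bool" where
  "diamond_eq a b c \<longleftrightarrow>
     (\<exists>N. (\<forall>k\<ge>N. dsummand a b k \<in> II) \<and> (\<Sum>k<N. dsummand a b k) - c \<in> II)"

end

end

theory Submission
  imports Defs
begin

locale wc =
  fixes W :: "('a::ring_1, 'b) WC_scheme"
  assumes eta_sym: "\<forall>i<dim W. \<forall>j<dim W. eta W i j = eta W j i"
    and eta_inv1: "\<forall>i<dim W. \<forall>k<dim W. (\<Sum>j<dim W. eta W i j * etai W j k) = (if i = k then 1 else 0)"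
    and eta_inv2: "\<forall>i<dim W. \<forall>k<dim W. (\<Sum>j<dim W. etai W i j * eta W j k) = (if i = k then 1 else 0)"
    and alg: "WC_alg W"
begin

abbreviation "s \<equiv> sc W"
abbreviation "H \<equiv> Hop W"
abbreviation "X \<equiv> Xop W"
abbreviation "Y \<equiv> Yop W"
abbreviation "cc \<equiv> \<i> / complex_of_real (sqrt 2)"

lemma s_add: "s (a + b) = s a + s b" using alg unfolding WC_alg_def by blast
lemma s_mult: "s (a * b) = s a * s b" using alg unfolding WC_alg_def by blast
lemma s_1: "s 1 = 1" using alg unfolding WC_alg_def by blast
lemma s_comm: "s c * r = r * s c" using alg unfolding WC_alg_def by blast

lemma rel:
  assumes "i < dim W" "j < dim W"
  shows "xv W i * xv W j = xv W j * xv W i"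
    "dv W i * dv W j = dv W j * dv W i"
    "dv W i * xv W j = xv W j * dv W i + (if i = j then 1 else 0)"
    "gv W i * xv W j = xv W j * gv W i"
    "gv W i * dv W j = dv W j * gv W i"
    "gv W i * gv W j = s (2 * eta W i j) - gv W j * gv W i"
proof -
  have R: "\<forall>i<dim W. \<forall>j<dim W.
        xv W i * xv W j = xv W j * xv W i \<and>
        dv W i * dv W j = dv W j * dv W i \<and>
        dv W i * xv W j - xv W j * dv W i = (if i = j then 1 else 0) \<and>
        gv W i * xv W j = xv W j * gv W i \<and>
        gv W i * dv W j = dv W j * gv W i \<and>
        gv W i * gv W j + gv W j * gv W i = sc W (2 * eta W i j)"
    using alg unfolding WC_alg_def by blast
  then have r: "xv W i * xv W j = xv W j * xv W i \<and>
        dv W i * dv W j = dv W j * dv W i \<and>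
        dv W i * xv W j - xv W j * dv W i = (if i = j then 1 else 0) \<and>
        gv W i * xv W j = xv W j * gv W i \<and>
        gv W i * dv W j = dv W j * gv W i \<and>
        gv W i * gv W j + gv W j * gv W i = sc W (2 * eta W i j)" using assms by blast
  then show "xv W i * xv W j = xv W j * xv W i"
    "dv W i * dv W j = dv W j * dv W i"
    "gv W i * xv W j = xv W j * gv W i"
    "gv W i * dv W j = dv W j * gv W i"
    "gv W i * gv W j = s (2 * eta W i j) - gv W j * gv W i"
    by (simp_all add: eq_diff_eq)
  have d: "dv W i * xv W j - xv W j * dv W i = (if i = j then 1 else 0)" using r by blast
  have "dv W i * xv W j = (dv W i * xv W j - xv W j * dv W i) + xv W j * dv W i" by simp
  also have "\<dots> = (if i = j then 1 else 0) + xv W j * dv W i" by (simp only: d)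
  finally show "dv W i * xv W j = xv W j * dv W i + (if i = j then 1 else 0)"
    by (simp only: add.commute)
qed

lemma hinv1: "(H + of_int k) * hinv W k = 1" and hinv2: "hinv W k * (H + of_int k) = 1"
  using alg unfolding WC_alg_def by blast+

lemma s_0: "s 0 = 0"
proof -
  have "s 0 = s 0 + s 0" using s_add[of 0 0] by simp
  thus ?thesis by simp
qed

lemma s_neg: "s (- a) = - s a"
proof -
  have "s a + s (-a) = 0" using s_add[of a "-a"] s_0 by simp
  thus ?thesis by (metis minus_unique)
qed

lemma s_diff: "s (a - b) = s a - s b"
  using s_add[of a "-b"] s_neg[of b] by simp

lemma s_sum: "s (sum f A) = (\<Sum>x\<in>A. s (f x))"
  by (induction A rule: infinite_finite_induct) (simp_all add: s_0 s_add)

lemma s_of_nat: "s (of_nat m) = of_nat m"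
  by (induction m) (simp_all add: s_0 s_add s_1)

lemma s_of_int: "s (of_int k) = of_int k"
proof (cases k rule: int_cases)
  case (nonneg m) then show ?thesis using s_of_nat[of m] by simp
next
  case (neg m) then show ?thesis using s_of_nat[of "Suc m"] s_neg[of "of_nat (Suc m)"]
    by (simp del: of_nat_Suc)
qed

lemma s_numeral: "s (numeral k) = numeral k"
  using s_of_nat[of "numeral k"] by simp

lemma of_int_comm: "of_int k * r = r * (of_int k :: 'a)"
  using s_comm[of "of_int k" r] s_of_int[of k] by simp

lemma s_mult_left: "s a * (s b * r) = s (a * b) * r"
  by (simp add: s_mult mult.assoc)

lemma s_pull: "r * (s a * q) = s a * (r * q)"
  by (metis mult.assoc s_comm)

lemma cc2: "cc * cc = - 1 / 2"
proof -
  have "complex_of_real (sqrt 2) * complex_of_real (sqrt 2) = 2"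
    by (simp flip: of_real_mult)
  thus ?thesis by (simp add: field_simps)
qed

definition shifts :: "'a \<Rightarrow> int \<Rightarrow> bool" where
  "shifts u m \<longleftrightarrow> u * H = (H + of_int m) * u"

lemma shifts_sc: "shifts (s c) 0" by (simp add: shifts_def s_comm)
lemma shifts_0: "shifts 0 m" by (simp add: shifts_def)
lemma shifts_1: "shifts 1 0" by (simp add: shifts_def)
lemma shifts_add: "shifts u m \<Longrightarrow> shifts v m \<Longrightarrow> shifts (u + v) m"
  by (simp add: shifts_def algebra_simps)
lemma shifts_diff: "shifts u m \<Longrightarrow> shifts v m \<Longrightarrow> shifts (u - v) m"
  by (simp add: shifts_def algebra_simps)
lemma shifts_mult: "shifts u m \<Longrightarrow> shifts v m' \<Longrightarrow> shifts (u * v) (m + m')"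
proof -
  assume a: "shifts u m" "shifts v m'"
  have "u * v * H = u * (H + of_int m') * v" using a(2) by (simp add: shifts_def mult.assoc)
  also have "\<dots> = (u * H + of_int m' * u) * v" by (simp add: distrib_left of_int_comm[of m' u])
  also have "\<dots> = (H + of_int (m + m')) * (u * v)" using a(1)
    by (simp add: shifts_def algebra_simps)
  finally show ?thesis by (simp add: shifts_def)
qed
lemma shifts_cong: "shifts u m \<Longrightarrow> m = m' \<Longrightarrow> shifts u m'" by simp
lemma shifts_sum: "(\<And>i. i \<in> A \<Longrightarrow> shifts (f i) m) \<Longrightarrow> shifts (sum f A) m"
  by (induction A rule: infinite_finite_induct) (simp_all add: shifts_0 shifts_add)
lemma shifts_pow: "shifts u m \<Longrightarrow> shifts (u ^ k) (int k * m)"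
proof (induction k)
  case 0 then show ?case by (simp add: shifts_1)
next
  case (Suc k)
  then have "shifts (u * u ^ k) (m + int k * m)" using shifts_mult by blast
  then show ?case by (simp add: algebra_simps)
qed
lemma shifts_scmult: "shifts u m \<Longrightarrow> shifts (s c * u) m"
  using shifts_mult[OF shifts_sc] by simp

lemma shifts_hinv_gen: assumes "shifts u m" shows "u * hinv W k = hinv W (k + m) * u"
proof -
  have e: "u * (H + of_int k) = (H + of_int (k + m)) * u"
    using assms by (simp add: shifts_def algebra_simps of_int_comm[of k u])
  have "hinv W (k + m) * u = hinv W (k + m) * u * ((H + of_int k) * hinv W k)"
    by (simp add: hinv1)
  also have "\<dots> = hinv W (k + m) * (u * (H + of_int k)) * hinv W k" by (simp add: mult.assoc)
  also have "\<dots> = (hinv W (k + m) * (H + of_int (k + m))) * u * hinv W k" by (simp add: e mult.assoc)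
  also have "\<dots> = u * hinv W k" by (simp only: hinv2 mult_1_left)
  finally show ?thesis by simp
qed

lemma shifts_H: "shifts H 0" by (simp add: shifts_def)

lemma shifts_hinv: "shifts (hinv W k) 0"
proof -
  have c: "H * (H + of_int k) = (H + of_int k) * H"
    by (simp add: distrib_left distrib_right of_int_comm[of k H])
  have "hinv W k * H = hinv W k * H * ((H + of_int k) * hinv W k)" by (simp add: hinv1)
  also have "\<dots> = hinv W k * (H * (H + of_int k)) * hinv W k" by (simp only: mult.assoc)
  also have "\<dots> = (hinv W k * (H + of_int k)) * H * hinv W k" by (simp only: c mult.assoc)
  also have "\<dots> = H * hinv W k" by (simp only: hinv2 mult_1_left)
  finally show ?thesis by (simp add: shifts_def)
qed

lemma shifts_HRat: "\<phi> \<in> HRat W \<Longrightarrow> shifts \<phi> 0"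
proof (induction rule: HRat.induct)
  case (hr_mult a b) then show ?case using shifts_mult[of a 0 b 0] by simp
qed (auto intro: shifts_sc shifts_H shifts_hinv shifts_add)

lemma Hop_eq: "H = s (-1/2) * (\<Sum>l<dim W. dv W l * xv W l + xv W l * dv W l)"
  by (simp add: Hop_def)

lemma s_two: "s (-1/2) * (2 * r) = - r"
proof -
  have "s (-1/2) * (2 * r) = s (-1/2) * (s 2 * r)" by (simp add: s_numeral)
  also have "\<dots> = s (-1) * r" by (simp add: s_mult_left)
  also have "\<dots> = - r" by (simp add: s_neg s_1)
  finally show ?thesis .
qed

lemma s_two': "s (- (1/2)) * (2 * r) = - r" using s_two by simp
lemmas s_twos = s_two s_two'

lemma shifts_x: assumes j: "j < dim W" shows "shifts (xv W j) 1"
proof -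
  define T where "T = (\<lambda>l. dv W l * xv W l + xv W l * dv W l)"
  have HT: "H = s (-1/2) * (\<Sum>l<dim W. T l)" by (simp add: Hop_eq T_def)
  have key: "xv W j * T l = T l * xv W j - (if l = j then 2 * xv W j else 0)" if l: "l < dim W" for l
  proof -
    have A: "xv W j * dv W l = dv W l * xv W j - (if l = j then 1 else 0)" using rel(3)[OF l j] by simp
    have B: "xv W j * xv W l = xv W l * xv W j" using rel(1)[OF j l] .
    have 1: "xv W j * (dv W l * xv W l) = dv W l * xv W l * xv W j - (if l = j then 1 else 0) * xv W l"
    proof -
      have "xv W j * (dv W l * xv W l) = (xv W j * dv W l) * xv W l" by (simp add: mult.assoc)
      also have "\<dots> = dv W l * (xv W j * xv W l) - (if l = j then 1 else 0) * xv W l"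
        by (simp add: A left_diff_distrib mult.assoc)
      also have "\<dots> = dv W l * xv W l * xv W j - (if l = j then 1 else 0) * xv W l"
        by (simp add: B mult.assoc)
      finally show ?thesis .
    qed
    have 2: "xv W j * (xv W l * dv W l) = xv W l * dv W l * xv W j - xv W l * (if l = j then 1 else 0)"
    proof -
      have "xv W j * (xv W l * dv W l) = xv W l * (xv W j * dv W l)" by (metis B mult.assoc)
      also have "\<dots> = xv W l * dv W l * xv W j - xv W l * (if l = j then 1 else 0)"
        by (simp add: A right_diff_distrib mult.assoc)
      finally show ?thesis .
    qed
    have "xv W j * T l = (dv W l * xv W l * xv W j - (if l = j then 1 else 0) * xv W l)
       + (xv W l * dv W l * xv W j - xv W l * (if l = j then 1 else 0))"
      by (simp add: T_def distrib_left 1 2)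
    then show ?thesis by (cases "l = j") (simp_all add: T_def algebra_simps mult_2)
  qed
  have "xv W j * H = s (-1/2) * (xv W j * (\<Sum>l<dim W. T l))"
    by (simp add: HT s_pull)
  also have "\<dots> = s (-1/2) * (\<Sum>l<dim W. T l * xv W j - (if l = j then 2 * xv W j else 0))"
    by (simp add: sum_distrib_left key)
  also have "\<dots> = s (-1/2) * ((\<Sum>l<dim W. T l) * xv W j - 2 * xv W j)"
    using j by (simp add: sum_subtractf sum_distrib_right)
  also have "\<dots> = H * xv W j + xv W j"
    by (simp add: HT right_diff_distrib s_twos mult.assoc)
  finally show ?thesis by (simp add: shifts_def algebra_simps)
qed

lemma shifts_d: assumes j: "j < dim W" shows "shifts (dv W j) (-1)"
proof -
  define T where "T = (\<lambda>l. dv W l * xv W l + xv W l * dv W l)"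
  have HT: "H = s (-1/2) * (\<Sum>l<dim W. T l)" by (simp add: Hop_eq T_def)
  have key: "dv W j * T l = T l * dv W j + (if l = j then 2 * dv W j else 0)" if l: "l < dim W" for l
  proof -
    have A: "dv W j * xv W l = xv W l * dv W j + (if j = l then 1 else 0)" using rel(3)[OF j l] by simp
    have B: "dv W j * dv W l = dv W l * dv W j" using rel(2)[OF j l] .
    have 1: "dv W j * (dv W l * xv W l) = dv W l * xv W l * dv W j + dv W l * (if j = l then 1 else 0)"
    proof -
      have "dv W j * (dv W l * xv W l) = dv W l * (dv W j * xv W l)" by (metis B mult.assoc)
      also have "\<dots> = dv W l * xv W l * dv W j + dv W l * (if j = l then 1 else 0)"
        by (simp add: A distrib_left mult.assoc)
      finally show ?thesis .
    qed
    have 2: "dv W j * (xv W l * dv W l) = xv W l * dv W l * dv W j + (if j = l then 1 else 0) * dv W l"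
    proof -
      have "dv W j * (xv W l * dv W l) = (dv W j * xv W l) * dv W l" by (simp add: mult.assoc)
      also have "\<dots> = xv W l * (dv W j * dv W l) + (if j = l then 1 else 0) * dv W l"
        by (simp add: A distrib_right mult.assoc)
      also have "\<dots> = xv W l * dv W l * dv W j + (if j = l then 1 else 0) * dv W l"
        by (simp add: B mult.assoc)
      finally show ?thesis .
    qed
    have "dv W j * T l = (dv W l * xv W l * dv W j + dv W l * (if j = l then 1 else 0))
       + (xv W l * dv W l * dv W j + (if j = l then 1 else 0) * dv W l)"
      by (simp add: T_def distrib_left 1 2)
    then show ?thesis by (cases "l = j") (simp_all add: T_def algebra_simps mult_2)
  qed
  have "dv W j * H = s (-1/2) * (dv W j * (\<Sum>l<dim W. T l))"
    by (simp add: HT s_pull)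
  also have "\<dots> = s (-1/2) * (\<Sum>l<dim W. T l * dv W j + (if l = j then 2 * dv W j else 0))"
    by (simp add: sum_distrib_left key)
  also have "\<dots> = s (-1/2) * ((\<Sum>l<dim W. T l) * dv W j + 2 * dv W j)"
    using j by (simp add: sum.distrib sum_distrib_right)
  also have "\<dots> = H * dv W j - dv W j"
    by (simp add: HT distrib_left s_twos mult.assoc)
  finally show ?thesis by (simp add: shifts_def algebra_simps)
qed

lemma shifts_g: assumes j: "j < dim W" shows "shifts (gv W j) 0"
proof -
  define T where "T = (\<lambda>l. dv W l * xv W l + xv W l * dv W l)"
  have HT: "H = s (-1/2) * (\<Sum>l<dim W. T l)" by (simp add: Hop_eq T_def)
  have key: "gv W j * T l = T l * gv W j" if l: "l < dim W" for l
  proof -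
    have A: "gv W j * xv W l = xv W l * gv W j" using rel(4)[OF j l] .
    have B: "gv W j * dv W l = dv W l * gv W j" using rel(5)[OF j l] .
    have 1: "gv W j * (dv W l * xv W l) = dv W l * xv W l * gv W j" by (metis A B mult.assoc)
    have 2: "gv W j * (xv W l * dv W l) = xv W l * dv W l * gv W j" by (metis A B mult.assoc)
    show ?thesis by (simp only: T_def distrib_left distrib_right 1 2)
  qed
  have "gv W j * H = s (-1/2) * (gv W j * (\<Sum>l<dim W. T l))"
    by (simp add: HT s_pull)
  also have "\<dots> = s (-1/2) * ((\<Sum>l<dim W. T l) * gv W j)"
    by (simp add: sum_distrib_left sum_distrib_right key)
  also have "\<dots> = H * gv W j" by (simp add: HT mult.assoc)
  finally show ?thesis by (simp add: shifts_def)
qed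

lemma shifts_lin: "(\<And>l. l < dim W \<Longrightarrow> shifts (f l) m) \<Longrightarrow> shifts (\<Sum>l<dim W. s (c l) * f l) m"
  by (rule shifts_sum) (simp add: shifts_scmult)

lemma shifts_xlow: "shifts (xlow W i) 1"
  unfolding xlow_def by (rule shifts_lin) (simp add: shifts_x)
lemma shifts_glow: "shifts (glow W i) 0"
  unfolding glow_def by (rule shifts_lin) (simp add: shifts_g)
lemma shifts_dup: "shifts (dup W i) (-1)"
  unfolding dup_def by (rule shifts_lin) (simp add: shifts_d)
lemma shifts_Y: "shifts Y 1"
  unfolding Yop_def
  by (rule shifts_scmult, rule shifts_sum, rule shifts_cong[OF shifts_mult[OF shifts_g shifts_xlow]]) auto
lemma shifts_X: "shifts X (-1)"
  unfolding Xop_def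
  by (rule shifts_scmult, rule shifts_sum, rule shifts_cong[OF shifts_mult[OF shifts_g shifts_d]]) auto

lemma shift_kinv: "shifts u m \<Longrightarrow> u * kinv W k t = kinv W k (t + m) * u"
  by (simp add: kinv_def s_comm shifts_hinv_gen algebra_simps)

lemma shift_phiH: "shifts u m \<Longrightarrow> u * phiH W k t = phiH W k (t + m) * u"
proof (induction k)
  case 0 then show ?case by simp
next
  case (Suc k)
  have "u * phiH W (Suc k) t = (u * phiH W k t) * s ((-1) ^ Suc k) * kinv W (Suc k) t"
    by (simp add: mult.assoc)
  also have "\<dots> = phiH W k (t + m) * s ((-1) ^ Suc k) * (u * kinv W (Suc k) t)"
    using Suc by (simp add: mult.assoc s_comm)
  also have "\<dots> = phiH W (Suc k) (t + m) * u"
    using shift_kinv[OF Suc.prems] by (simp add: mult.assoc)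
  finally show ?case .
qed

lemma kinv_HRat: "kinv W k t \<in> HRat W" by (simp add: kinv_def HRat.intros)
lemma phiH_HRat: "phiH W k t \<in> HRat W"
  by (induction k) (auto intro: HRat.intros kinv_HRat simp: s_1[symmetric])

lemma shift_HRat_right: assumes sh: "shifts u m" and ph: "\<phi> \<in> HRat W" shows "\<exists>\<psi>\<in>HRat W. \<phi> * u = u * \<psi>"
  using ph
proof (induction rule: HRat.induct)
  case (hr_sc c) then show ?case by (metis HRat.hr_sc s_comm)
next
  case hr_H
  have "H * u = u * (H + s (- of_int m))"
    using sh by (simp add: shifts_def s_neg s_of_int algebra_simps of_int_comm[of m u])
  then show ?case by (blast intro: HRat.intros)
next
  case (hr_hinv k)
  have "hinv W k * u = u * hinv W (k - m)" using shifts_hinv_gen[OF sh, of "k - m"] by simp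
  then show ?case by (blast intro: HRat.intros)
next
  case (hr_add a b)
  then obtain p q where "p \<in> HRat W" "q \<in> HRat W" "a * u = u * p" "b * u = u * q" by blast
  then show ?case by (intro bexI[of _ "p + q"]) (auto simp: algebra_simps intro: HRat.intros)
next
  case (hr_mult a b)
  then obtain p q where "p \<in> HRat W" "q \<in> HRat W" "a * u = u * p" "b * u = u * q" by blast
  then show ?case by (intro bexI[of _ "p * q"]) (auto simp: mult.assoc intro: HRat.intros, metis mult.assoc)
qed

lemma shift_HRat_left: assumes sh: "shifts u m" and ph: "\<phi> \<in> HRat W" shows "\<exists>\<psi>\<in>HRat W. u * \<phi> = \<psi> * u"
  using ph
proof (induction rule: HRat.induct)
  case (hr_sc c) then show ?case by (metis HRat.hr_sc s_comm)
next
  case hr_H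
  have "u * H = (H + s (of_int m)) * u"
    using sh by (simp add: shifts_def s_of_int)
  then show ?case by (blast intro: HRat.intros)
next
  case (hr_hinv k)
  have "u * hinv W k = hinv W (k + m) * u" using shifts_hinv_gen[OF sh] by simp
  then show ?case by (blast intro: HRat.intros)
next
  case (hr_add a b)
  then obtain p q where "p \<in> HRat W" "q \<in> HRat W" "u * a = p * u" "u * b = q * u" by blast
  then show ?case by (intro bexI[of _ "p + q"]) (auto simp: algebra_simps intro: HRat.intros)
next
  case (hr_mult a b)
  then obtain p q where "p \<in> HRat W" "q \<in> HRat W" "u * a = p * u" "u * b = q * u" by blast
  then show ?case by (intro bexI[of _ "p * q"]) (auto simp: mult.assoc intro: HRat.intros, metis mult.assoc)
qed


lemma Agen_0: "0 \<in> Agen W" using Agen.gen_sc[of W 0] s_0 by simp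
lemma Agen_1: "1 \<in> Agen W" using Agen.gen_sc[of W 1] s_1 by simp
lemma Agen_neg: assumes "a \<in> Agen W" shows "- a \<in> Agen W"
proof -
  have "s (-1) * a \<in> Agen W" using assms by (rule Agen.gen_mult[OF Agen.gen_sc])
  moreover have "s (-1) * a = - a" by (simp only: s_neg s_1) simp
  ultimately show ?thesis by simp
qed
lemma Agen_diff: assumes "a \<in> Agen W" "b \<in> Agen W" shows "a - b \<in> Agen W"
proof -
  have "a + - b \<in> Agen W" using assms by (intro Agen.gen_add Agen_neg)
  then show ?thesis by (simp only: diff_conv_add_uminus)
qed
lemma Agen_sum: "(\<And>l. l \<in> A \<Longrightarrow> f l \<in> Agen W) \<Longrightarrow> sum f A \<in> Agen W"
  by (induction A rule: infinite_finite_induct) (simp_all add: Agen_0 Agen.gen_add)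
lemma Agen_pow: "a \<in> Agen W \<Longrightarrow> a ^ k \<in> Agen W"
  by (induction k) (simp_all add: Agen_1 Agen.gen_mult)
lemma Agen_xlow: "xlow W i \<in> Agen W"
  unfolding xlow_def by (intro Agen_sum Agen.gen_mult Agen.gen_sc Agen.gen_x) simp
lemma Agen_glow: "glow W i \<in> Agen W"
  unfolding glow_def by (intro Agen_sum Agen.gen_mult Agen.gen_sc Agen.gen_g) simp
lemma Agen_dup: "dup W i \<in> Agen W"
  unfolding dup_def by (intro Agen_sum Agen.gen_mult Agen.gen_sc Agen.gen_d) simp
lemma Agen_X: "X \<in> Agen W"
  unfolding Xop_def by (intro Agen_sum Agen.gen_mult Agen.gen_sc Agen.gen_d Agen.gen_g; simp)
lemma Agen_Y: "Y \<in> Agen W"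
  unfolding Yop_def by (intro Agen_sum Agen.gen_mult Agen.gen_sc Agen.gen_g Agen_xlow; simp)
lemma Agen_H: "H \<in> Agen W"
  unfolding Hop_def by (intro Agen_sum Agen.gen_mult Agen.gen_sc Agen.gen_add Agen.gen_d Agen.gen_x; simp)
lemma HRat_Agen: "\<phi> \<in> HRat W \<Longrightarrow> \<phi> \<in> Agen W"
proof (induction rule: HRat.induct)
  case (hr_add a b) then show ?case by (blast intro: Agen.gen_add)
next
  case (hr_mult a b) then show ?case by (blast intro: Agen.gen_mult)
qed (simp_all add: Agen.gen_sc Agen.gen_hinv Agen_H)
lemma Agen_phiH: "phiH W k t \<in> Agen W" by (rule HRat_Agen[OF phiH_HRat])

lemmas Agen_I = Agen.intros Agen_0 Agen_1 Agen_neg Agen_diff Agen_pow Agen_xlow Agen_glow Agen_dup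
  Agen_X Agen_Y Agen_H Agen_phiH HRat_Agen

lemma II_Y: "r \<in> Agen W \<Longrightarrow> Y * r \<in> II W"
  unfolding II_def using Agen_0 by (intro CollectI exI[of _ r] exI[of _ 0]) auto
lemma II_X: "r \<in> Agen W \<Longrightarrow> r * X \<in> II W"
  unfolding II_def using Agen_0 by (intro CollectI exI[of _ 0] exI[of _ r]) auto
lemma II_0: "0 \<in> II W" using II_Y[OF Agen_0] by simp
lemma II_add: assumes "u \<in> II W" "v \<in> II W" shows "u + v \<in> II W"
proof -
  from assms obtain a1 a2 a3 a4 b1 b2 b3 b4 where
    u: "u = Y * a1 + Fop W * a2 + a3 * X + a4 * Eop W" and
    v: "v = Y * b1 + Fop W * b2 + b3 * X + b4 * Eop W" and
    m: "a1 \<in> Agen W" "a2 \<in> Agen W" "a3 \<in> Agen W" "a4 \<in> Agen W"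
       "b1 \<in> Agen W" "b2 \<in> Agen W" "b3 \<in> Agen W" "b4 \<in> Agen W"
    unfolding II_def by blast
  have "u + v = Y * (a1 + b1) + Fop W * (a2 + b2) + (a3 + b3) * X + (a4 + b4) * Eop W"
    by (simp add: u v algebra_simps)
  then show ?thesis unfolding II_def using m by (blast intro: Agen.gen_add)
qed
lemma II_neg: assumes "u \<in> II W" shows "- u \<in> II W"
proof -
  from assms obtain a1 a2 a3 a4 where
    u: "u = Y * a1 + Fop W * a2 + a3 * X + a4 * Eop W" and
    m: "a1 \<in> Agen W" "a2 \<in> Agen W" "a3 \<in> Agen W" "a4 \<in> Agen W"
    unfolding II_def by blast
  have "- u = Y * (- a1) + Fop W * (- a2) + (- a3) * X + (- a4) * Eop W"
    by (simp add: u algebra_simps)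
  then show ?thesis unfolding II_def using m by (blast intro: Agen_neg)
qed
lemma II_diff: assumes "u \<in> II W" "v \<in> II W" shows "u - v \<in> II W"
proof -
  have "u + - v \<in> II W" using assms by (intro II_add II_neg)
  then show ?thesis by (simp only: diff_conv_add_uminus)
qed

definition comm :: "'a \<Rightarrow> 'a \<Rightarrow> bool" where "comm u v \<longleftrightarrow> u * v = v * u"

lemma comm_sym: "comm u v \<Longrightarrow> comm v u" by (simp add: comm_def)
lemma comm_sc: "comm (s c) v" by (simp add: comm_def s_comm)
lemma comm_add: "comm a u \<Longrightarrow> comm b u \<Longrightarrow> comm (a + b) u"
  by (simp add: comm_def algebra_simps)
lemma comm_mult: "comm a u \<Longrightarrow> comm b u \<Longrightarrow> comm (a * b) u"
  by (simp add: comm_def) (metis mult.assoc)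
lemma comm_sum: "(\<And>l. l \<in> A \<Longrightarrow> comm (f l) u) \<Longrightarrow> comm (sum f A) u"
  by (induction A rule: infinite_finite_induct) (simp_all add: comm_add comm_def[of 0])
lemma comm_lin: "(\<And>l. l < dim W \<Longrightarrow> comm (f l) u) \<Longrightarrow> comm (\<Sum>l<dim W. s (c l) * f l) u"
  by (rule comm_sum) (simp add: comm_mult comm_sc)
lemma comm_pow: "comm a u \<Longrightarrow> comm (a ^ k) u"
  by (induction k) (simp_all add: comm_mult, simp add: comm_def)

lemma comm_d_X: "j < dim W \<Longrightarrow> comm X (dv W j)"
  unfolding Xop_def
  by (intro comm_mult comm_sc comm_sum) (simp_all add: comm_def rel(2,5))
lemma comm_dup_X: "comm (dup W j) X"
  unfolding dup_def by (intro comm_lin comm_sym[OF comm_d_X])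
lemma comm_x_xlow: "j < dim W \<Longrightarrow> comm (xlow W l) (xv W j)"
  unfolding xlow_def by (intro comm_lin) (simp add: comm_def rel(1))
lemma comm_x_Y: "j < dim W \<Longrightarrow> comm Y (xv W j)"
  unfolding Yop_def
  by (intro comm_mult comm_sc comm_sum comm_x_xlow) (simp_all add: comm_def rel(4))
lemma comm_xlow_Y: "comm (xlow W i) Y"
  unfolding xlow_def by (intro comm_lin comm_sym[OF comm_x_Y])
lemma comm_g_xlow: "j < dim W \<Longrightarrow> comm (xlow W l) (gv W j)"
  unfolding xlow_def by (intro comm_lin) (simp add: comm_def rel(4))
lemma comm_g_phiH: "j < dim W \<Longrightarrow> comm (phiH W k t) (gv W j)"
  using shift_phiH[OF shifts_g, of j k t] by (simp add: comm_def)


subsection \<open>Clifford identities\<close>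

lemma etai_sym: assumes i: "i < dim W" and l: "l < dim W" shows "etai W i l = etai W l i"
proof -
  have 2: "(\<Sum>k<dim W. etai W k i * eta W k j) = (if i = j then 1 else 0)" if j: "j < dim W" for j
  proof -
    have "(\<Sum>k<dim W. etai W k i * eta W k j) = (\<Sum>k<dim W. eta W j k * etai W k i)"
      using eta_sym j by (intro sum.cong) (auto simp: mult.commute)
    also have "\<dots> = (if i = j then 1 else 0)" using eta_inv1 i j by auto
    finally show ?thesis .
  qed
  have "(\<Sum>j<dim W. (if i = j then 1 else 0) * etai W j l) = (\<Sum>j<dim W. if i = j then etai W j l else 0)"
    by (rule sum.cong) auto
  then have "etai W i l = (\<Sum>j<dim W. (if i = j then 1 else 0) * etai W j l)" using i by simp
  also have "\<dots> = (\<Sum>j<dim W. (\<Sum>k<dim W. etai W k i * eta W k j) * etai W j l)"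
    by (intro sum.cong) (simp_all add: 2)
  also have "\<dots> = (\<Sum>j<dim W. \<Sum>k<dim W. etai W k i * eta W k j * etai W j l)"
    by (simp add: sum_distrib_right)
  also have "\<dots> = (\<Sum>k<dim W. \<Sum>j<dim W. etai W k i * eta W k j * etai W j l)"
    by (rule sum.swap)
  also have "\<dots> = (\<Sum>k<dim W. etai W k i * (\<Sum>j<dim W. eta W k j * etai W j l))"
    by (simp add: sum_distrib_left mult.assoc)
  also have "\<dots> = (\<Sum>k<dim W. etai W k i * (if k = l then 1 else 0))"
    using eta_inv1 l by (intro sum.cong) auto
  also have "\<dots> = (\<Sum>k<dim W. if k = l then etai W k i else 0)"
    by (rule sum.cong) auto
  also have "\<dots> = etai W l i" using l by simp
  finally show ?thesis .
qed

lemma raise: assumes i: "i < dim W" shows "(\<Sum>l<dim W. s (eta W i l) * xlow W l) = xv W i"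
proof -
  have "(\<Sum>l<dim W. s (eta W i l) * xlow W l)
      = (\<Sum>l<dim W. \<Sum>m<dim W. s (eta W i l * etai W l m) * xv W m)"
    by (simp add: xlow_def sum_distrib_left s_mult mult.assoc)
  also have "\<dots> = (\<Sum>m<dim W. \<Sum>l<dim W. s (eta W i l * etai W l m) * xv W m)"
    by (rule sum.swap)
  also have "\<dots> = (\<Sum>m<dim W. s (\<Sum>l<dim W. eta W i l * etai W l m) * xv W m)"
    by (simp add: s_sum sum_distrib_right)
  also have "\<dots> = (\<Sum>m<dim W. s (if i = m then 1 else 0) * xv W m)"
    using eta_inv1 i by (intro sum.cong) auto
  also have "\<dots> = (\<Sum>m<dim W. if i = m then xv W m else 0)"
    by (rule sum.cong) (auto simp: s_0 s_1)
  also have "\<dots> = xv W i" using i by simp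
  finally show ?thesis .
qed

lemma X_g: assumes j: "j < dim W" shows "X * gv W j = s (2 * cc) * dup W j - gv W j * X"
proof -
  have e: "gv W l * dv W l * gv W j = s (2 * eta W j l) * dv W l - gv W j * (gv W l * dv W l)"
    if l: "l < dim W" for l
  proof -
    have "gv W l * dv W l * gv W j = gv W l * (dv W l * gv W j)" by (simp only: mult.assoc)
    also have "\<dots> = (gv W l * gv W j) * dv W l" by (simp only: rel(5)[OF j l, symmetric] mult.assoc)
    also have "\<dots> = (s (2 * eta W l j) - gv W j * gv W l) * dv W l" by (simp only: rel(6)[OF l j])
    also have "\<dots> = s (2 * eta W j l) * dv W l - gv W j * (gv W l * dv W l)"
      using eta_sym j l by (simp add: left_diff_distrib mult.assoc)
    finally show ?thesis .
  qed
  have "X * gv W j = s cc * (\<Sum>l<dim W. gv W l * dv W l * gv W j)"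
    by (simp add: Xop_def sum_distrib_right mult.assoc)
  also have "\<dots> = s cc * ((\<Sum>l<dim W. s (2 * eta W j l) * dv W l) - gv W j * (\<Sum>l<dim W. gv W l * dv W l))"
    by (simp add: e sum_subtractf sum_distrib_left)
  also have "\<dots> = s (2 * cc) * dup W j - gv W j * X"
  proof -
    have A: "(\<Sum>l<dim W. s (2 * eta W j l) * dv W l) = s 2 * dup W j"
      by (simp add: dup_def s_mult sum_distrib_left mult.assoc)
    have B: "s cc * (gv W j * (\<Sum>l<dim W. gv W l * dv W l)) = gv W j * X"
      by (simp add: Xop_def s_pull[of "gv W j" cc])
    show ?thesis by (simp add: right_diff_distrib A B s_mult_left mult.commute)
  qed
  finally show ?thesis .
qed

lemma X_x: assumes j: "j < dim W" shows "X * xv W j = xv W j * X + s cc * gv W j"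
proof -
  have e: "gv W l * dv W l * xv W j = xv W j * (gv W l * dv W l) + (if l = j then gv W l else 0)"
    if l: "l < dim W" for l
  proof -
    have "gv W l * dv W l * xv W j = gv W l * (dv W l * xv W j)" by (simp only: mult.assoc)
    also have "\<dots> = (gv W l * xv W j) * dv W l + gv W l * (if l = j then 1 else 0)"
      by (simp only: rel(3)[OF l j] distrib_left mult.assoc)
    also have "\<dots> = xv W j * (gv W l * dv W l) + (if l = j then gv W l else 0)"
      by (simp add: rel(4)[OF l j] mult.assoc)
    finally show ?thesis .
  qed
  have "X * xv W j = s cc * (\<Sum>l<dim W. gv W l * dv W l * xv W j)"
    by (simp add: Xop_def sum_distrib_right mult.assoc)
  also have "\<dots> = s cc * (xv W j * (\<Sum>l<dim W. gv W l * dv W l) + gv W j)"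
    using j by (simp add: e sum.distrib sum_distrib_left)
  also have "\<dots> = xv W j * X + s cc * gv W j"
    by (simp add: Xop_def distrib_left s_pull[of "xv W j" cc])
  finally show ?thesis .
qed


lemma g_Y: assumes i: "i < dim W" shows "gv W i * Y = s (2 * cc) * xv W i - Y * gv W i"
proof -
  have e: "gv W i * (gv W l * xlow W l) = s (2 * eta W i l) * xlow W l - gv W l * xlow W l * gv W i"
    if l: "l < dim W" for l
  proof -
    have "gv W i * (gv W l * xlow W l) = (gv W i * gv W l) * xlow W l" by (simp only: mult.assoc)
    also have "\<dots> = (s (2 * eta W i l) - gv W l * gv W i) * xlow W l" by (simp only: rel(6)[OF i l])
    also have "\<dots> = s (2 * eta W i l) * xlow W l - gv W l * (gv W i * xlow W l)"
      by (simp add: left_diff_distrib mult.assoc)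
    also have "\<dots> = s (2 * eta W i l) * xlow W l - gv W l * xlow W l * gv W i"
      using comm_g_xlow[OF i, of l] by (simp add: comm_def mult.assoc)
    finally show ?thesis .
  qed
  have A: "(\<Sum>l<dim W. s (2 * eta W i l) * xlow W l) = s 2 * xv W i"
    using raise[OF i] by (simp add: s_mult mult.assoc flip: sum_distrib_left)
  have "gv W i * Y = s cc * (gv W i * (\<Sum>l<dim W. gv W l * xlow W l))"
    by (simp add: Yop_def s_pull[of "gv W i" cc])
  also have "\<dots> = s cc * ((\<Sum>l<dim W. s (2 * eta W i l) * xlow W l) - (\<Sum>l<dim W. gv W l * xlow W l) * gv W i)"
    by (simp add: e sum_distrib_left sum_distrib_right sum_subtractf)
  also have "\<dots> = s (2 * cc) * xv W i - Y * gv W i"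
    by (simp only: A Yop_def right_diff_distrib s_mult_left mult.assoc) (simp add: mult.commute)
  finally show ?thesis .
qed

lemma d_xlow: assumes i: "i < dim W" shows "dv W i * xlow W l = xlow W l * dv W i + s (etai W l i)"
proof -
  have "dv W i * xlow W l = (\<Sum>m<dim W. s (etai W l m) * (dv W i * xv W m))"
    by (simp add: xlow_def sum_distrib_left s_pull[of "dv W i"])
  also have "\<dots> = (\<Sum>m<dim W. s (etai W l m) * xv W m * dv W i + (if i = m then s (etai W l m) else 0))"
    by (rule sum.cong) (auto simp: rel(3)[OF i] distrib_left mult.assoc)
  also have "\<dots> = xlow W l * dv W i + s (etai W l i)"
    using i by (simp add: sum.distrib xlow_def sum_distrib_right)
  finally show ?thesis .
qed

lemma d_Y: assumes i: "i < dim W" shows "dv W i * Y = Y * dv W i + s cc * glow W i"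
proof -
  have e: "dv W i * (gv W l * xlow W l) = gv W l * xlow W l * dv W i + s (etai W i l) * gv W l"
    if l: "l < dim W" for l
  proof -
    have "dv W i * (gv W l * xlow W l) = gv W l * (dv W i * xlow W l)"
      by (simp only: rel(5)[OF l i] mult.assoc[symmetric])
    also have "\<dots> = gv W l * xlow W l * dv W i + gv W l * s (etai W l i)"
      by (simp add: d_xlow[OF i] distrib_left mult.assoc)
    also have "\<dots> = gv W l * xlow W l * dv W i + s (etai W i l) * gv W l"
      using etai_sym[OF i l] s_comm by simp
    finally show ?thesis .
  qed
  have "dv W i * Y = s cc * (dv W i * (\<Sum>l<dim W. gv W l * xlow W l))"
    by (simp add: Yop_def s_pull[of "dv W i" cc])
  also have "\<dots> = s cc * ((\<Sum>l<dim W. gv W l * xlow W l) * dv W i + glow W i)"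
    by (simp add: e sum_distrib_left sum_distrib_right sum.distrib glow_def)
  also have "\<dots> = Y * dv W i + s cc * glow W i"
    by (simp add: Yop_def distrib_left mult.assoc)
  finally show ?thesis .
qed

lemma glow_Y: assumes i: "i < dim W" shows "glow W i * Y = s (2 * cc) * xlow W i - Y * glow W i"
proof -
  have "glow W i * Y = (\<Sum>l<dim W. s (etai W i l) * (gv W l * Y))"
    by (simp add: glow_def sum_distrib_right mult.assoc)
  also have "\<dots> = (\<Sum>l<dim W. s (2 * cc) * (s (etai W i l) * xv W l) - Y * (s (etai W i l) * gv W l))"
    by (rule sum.cong) (auto simp: g_Y right_diff_distrib s_mult_left s_pull[of Y] mult.commute)
  also have "\<dots> = s (2 * cc) * xlow W i - Y * glow W i"
    by (simp add: sum_subtractf sum_distrib_left xlow_def glow_def)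
  finally show ?thesis .
qed


definition c1 :: 'a where "c1 = s cc"
definition c2 :: 'a where "c2 = s (2 * cc)"

lemma X_g': "j < dim W \<Longrightarrow> X * gv W j = c2 * dup W j - gv W j * X" using X_g by (simp add: c2_def)
lemma X_x': "j < dim W \<Longrightarrow> X * xv W j = xv W j * X + c1 * gv W j" using X_x by (simp add: c1_def)
lemma g_Y': "i < dim W \<Longrightarrow> gv W i * Y = c2 * xv W i - Y * gv W i" using g_Y by (simp add: c2_def)
lemma d_Y': "i < dim W \<Longrightarrow> dv W i * Y = Y * dv W i + c1 * glow W i" using d_Y by (simp add: c1_def)
lemma glow_Y': "i < dim W \<Longrightarrow> glow W i * Y = c2 * xlow W i - Y * glow W i" using glow_Y by (simp add: c2_def)

definition isc :: "'a \<Rightarrow> bool" where "isc k \<longleftrightarrow> (\<exists>a. k = s a)"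
definition nonsc :: "'a \<Rightarrow> bool" where "nonsc h \<longleftrightarrow> True"

lemma isc_facts: "isc (s a)" "isc c1" "isc c2" by (auto simp: isc_def c1_def c2_def)
lemma nonsc_facts: "nonsc (gv W i)" "nonsc (xv W i)" "nonsc (dv W i)" "nonsc Y" "nonsc X"
  "nonsc (phiH W k t)" "nonsc (glow W i)" "nonsc (xlow W i)" "nonsc (dup W i)"
  "nonsc (X ^ m)" "nonsc (Y ^ m)"
  by (simp_all add: nonsc_def)

lemma pull_gen: "isc k \<Longrightarrow> h * (k * q) = k * (h * q)"
  by (auto simp: isc_def s_pull)
lemma pull2_gen: "isc k \<Longrightarrow> h * k = k * h"
  by (auto simp: isc_def s_comm)
lemma pull: "nonsc h \<Longrightarrow> h * (s a * q) = s a * (h * q)"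
  "nonsc h \<Longrightarrow> h * (c1 * q) = c1 * (h * q)"
  "nonsc h \<Longrightarrow> h * (c2 * q) = c2 * (h * q)"
  unfolding c1_def c2_def by (rule s_pull)+
lemma pull2: "nonsc h \<Longrightarrow> h * s a = s a * h"
  "nonsc h \<Longrightarrow> h * c1 = c1 * h"
  "nonsc h \<Longrightarrow> h * c2 = c2 * h"
  unfolding c1_def c2_def by (rule s_comm[symmetric])+

lemma ccs: "cc * cc = - (1/2)" "cc * (2 * cc) = -1" "2 * cc * cc = -1" "2 * cc * (2 * cc) = -2"
proof -
  have r: "complex_of_real (sqrt 2) * complex_of_real (sqrt 2) = 2"
    by (simp flip: of_real_mult)
  show "cc * cc = - (1/2)" "cc * (2 * cc) = -1" "2 * cc * cc = -1" "2 * cc * (2 * cc) = -2"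
    using r by (simp_all add: field_simps)
qed

lemma sclem: "c1 * (c1 * q) = - (s (1/2) * q)" "c1 * (c2 * q) = - q"
  "c2 * (c1 * q) = - q" "c2 * (c2 * q) = - (s 2 * q)"
  unfolding c1_def c2_def s_mult_left ccs s_neg s_1 by simp_all

lemmas N = algebra_simps pull pull2 sclem isc_facts nonsc_facts

definition inY :: "'a \<Rightarrow> bool" where "inY u \<longleftrightarrow> (\<exists>r\<in>Agen W. u = Y * r)"
definition inX :: "'a \<Rightarrow> bool" where "inX u \<longleftrightarrow> (\<exists>r\<in>Agen W. u = r * X)"

lemma Agen_c: "c1 \<in> Agen W" "c2 \<in> Agen W" by (simp_all add: c1_def c2_def Agen.gen_sc)

lemma inY_II: "inY u \<Longrightarrow> u \<in> II W" by (auto simp: inY_def II_Y)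
lemma inX_II: "inX u \<Longrightarrow> u \<in> II W" by (auto simp: inX_def II_X)
lemma inY_Y: "r \<in> Agen W \<Longrightarrow> inY (Y * r)" by (auto simp: inY_def)
lemma inX_X: "r \<in> Agen W \<Longrightarrow> inX (r * X)" by (auto simp: inX_def)
lemma inY_add: "inY u \<Longrightarrow> inY v \<Longrightarrow> inY (u + v)"
  unfolding inY_def by (metis Agen.gen_add distrib_left)
lemma inY_neg: "inY u \<Longrightarrow> inY (- u)"
  unfolding inY_def by (metis Agen_neg mult_minus_right)
lemma inY_diff: "inY u \<Longrightarrow> inY v \<Longrightarrow> inY (u - v)"
  unfolding inY_def by (metis Agen_diff right_diff_distrib)
lemma inX_add: "inX u \<Longrightarrow> inX v \<Longrightarrow> inX (u + v)"
  unfolding inX_def by (metis Agen.gen_add distrib_right)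
lemma inX_neg: "inX u \<Longrightarrow> inX (- u)"
  unfolding inX_def by (metis Agen_neg mult_minus_left)
lemma inX_left: "a \<in> Agen W \<Longrightarrow> inX u \<Longrightarrow> inX (a * u)"
  unfolding inX_def by (metis Agen.gen_mult mult.assoc)
lemma inY_right: "inY u \<Longrightarrow> b \<in> Agen W \<Longrightarrow> inY (u * b)"
  unfolding inY_def by (metis Agen.gen_mult mult.assoc)
lemma inY_sc: "isc k \<Longrightarrow> inY u \<Longrightarrow> inY (k * u)"
  unfolding inY_def isc_def by (metis Agen.gen_mult Agen.gen_sc mult.assoc s_comm)
lemma HRat_Y: assumes "\<phi> \<in> HRat W" shows "\<exists>\<psi>\<in>HRat W. \<phi> * Y = Y * \<psi>"
  using shift_HRat_right[OF shifts_Y assms] .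
lemma inY_HRat: assumes "\<phi> \<in> HRat W" "inY u" shows "inY (\<phi> * u)"
proof -
  obtain r where r: "r \<in> Agen W" "u = Y * r" using assms(2) by (auto simp: inY_def)
  obtain \<psi> where p: "\<psi> \<in> HRat W" "\<phi> * Y = Y * \<psi>" using HRat_Y[OF assms(1)] by blast
  have "\<phi> * u = Y * (\<psi> * r)" by (simp add: r p(2) flip: mult.assoc)
  then show ?thesis using r p HRat_Agen by (auto simp: inY_def intro: Agen.gen_mult)
qed
lemma inY_x: assumes "i < dim W" "inY u" shows "inY (xv W i * u)"
proof -
  obtain r where r: "r \<in> Agen W" "u = Y * r" using assms(2) by (auto simp: inY_def)
  have "xv W i * u = Y * (xv W i * r)" using comm_x_Y[OF assms(1)]
    by (simp add: r comm_def flip: mult.assoc)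
  then show ?thesis using r assms(1) by (auto simp: inY_def intro: Agen.intros)
qed
lemma inY_xlow: assumes "inY u" shows "inY (xlow W i * u)"
proof -
  obtain r where r: "r \<in> Agen W" "u = Y * r" using assms by (auto simp: inY_def)
  have "xlow W i * u = Y * (xlow W i * r)" using comm_xlow_Y
    by (simp add: r comm_def flip: mult.assoc)
  then show ?thesis using r by (auto simp: inY_def intro: Agen.intros Agen_xlow)
qed

lemma ds0: "dsummand W a b 0 = a * b" by (simp add: dsummand_def)

lemma dsX: assumes "a \<in> Agen W" "inX (X ^ k * b)" shows "dsummand W a b k \<in> II W"
proof -
  have "dsummand W a b k = (a * phiH W k 0 * Y ^ k) * (X ^ k * b)"
    by (simp add: dsummand_def mult.assoc)
  then show ?thesis using assms
    by (metis inX_II inX_left Agen.gen_mult Agen_pow Agen_Y Agen_phiH)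
qed

lemma dsY: assumes "b \<in> Agen W" "inY (a * phiH W k 0 * Y ^ k)" shows "dsummand W a b k \<in> II W"
proof -
  have "dsummand W a b k = (a * phiH W k 0 * Y ^ k) * (X ^ k * b)"
    by (simp add: dsummand_def mult.assoc)
  then show ?thesis using assms
    by (metis inY_II inY_right Agen.gen_mult Agen_pow Agen_X)
qed


lemma diamond_intro:
  "(\<And>k. k \<ge> N \<Longrightarrow> dsummand W a b k \<in> II W) \<Longrightarrow> (\<Sum>k<N. dsummand W a b k) - c \<in> II W
   \<Longrightarrow> diamond_eq W a b c"
  unfolding diamond_eq_def by blast

lemma sum2: "(\<Sum>k<(2::nat). f k) = f 0 + (f 1 :: 'a)" by (simp add: numeral_2_eq_2)
lemma sum3: "(\<Sum>k<(3::nat). f k) = f 0 + f 1 + (f 2 :: 'a)" by (simp add: numeral_3_eq_3 numeral_2_eq_2)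

lemma claim1: assumes a: "a \<in> Agen W" and j: "j < dim W"
  shows "diamond_eq W a (dv W j) (a * dv W j)"
proof (rule diamond_intro[of 1])
  fix k :: nat assume "k \<ge> 1"
  then obtain m where k: "k = Suc m" by (cases k) auto
  have "X ^ k * dv W j = X ^ m * (X * dv W j)" by (simp only: k power_Suc2 mult.assoc)
  also have "\<dots> = (X ^ m * dv W j) * X"
    using comm_d_X[OF j] by (simp add: mult.assoc comm_def)
  finally have "X ^ k * dv W j = (X ^ m * dv W j) * X" .
  then show "dsummand W a (dv W j) k \<in> II W"
    by (intro dsX a) (simp add: inX_X Agen.intros j Agen_pow Agen_X)
qed (simp add: ds0 II_0)

lemma claim2: assumes a: "a \<in> Agen W" and i: "i < dim W"
  shows "diamond_eq W (xv W i) a (xv W i * a)"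
proof (rule diamond_intro[of 1])
  fix k :: nat assume "k \<ge> 1"
  then obtain m where k: "k = Suc m" by (cases k) auto
  obtain \<psi> where p: "\<psi> \<in> HRat W" "phiH W k 0 * Y = Y * \<psi>" using HRat_Y[OF phiH_HRat] by blast
  have Yk: "Y ^ k = Y * Y ^ m" by (simp add: k)
  have "xv W i * phiH W k 0 * Y ^ k = xv W i * ((phiH W k 0 * Y) * Y ^ m)"
    by (simp only: Yk mult.assoc)
  also have "\<dots> = xv W i * (Y * (\<psi> * Y ^ m))" by (simp only: p(2) mult.assoc)
  finally have "xv W i * phiH W k 0 * Y ^ k = xv W i * (Y * (\<psi> * Y ^ m))" .
  moreover have "inY (xv W i * (Y * (\<psi> * Y ^ m)))"
    using p(1) by (intro inY_x i inY_Y Agen.gen_mult HRat_Agen Agen_pow Agen_Y)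
  ultimately show "dsummand W (xv W i) a k \<in> II W" by (intro dsY a) simp
qed (simp add: ds0 II_0)

lemma claim7: assumes a: "a \<in> Agen W" and ph: "\<phi> \<in> HRat W"
  shows "diamond_eq W \<phi> a (\<phi> * a)"
proof (rule diamond_intro[of 1])
  fix k :: nat assume "k \<ge> 1"
  then obtain m where k: "k = Suc m" by (cases k) auto
  obtain \<psi> where p: "\<psi> \<in> HRat W" "(\<phi> * phiH W k 0) * Y = Y * \<psi>"
    using HRat_Y[OF HRat.hr_mult[OF ph phiH_HRat]] by blast
  have Yk: "Y ^ k = Y * Y ^ m" by (simp add: k)
  have "\<phi> * phiH W k 0 * Y ^ k = ((\<phi> * phiH W k 0) * Y) * Y ^ m"
    by (simp only: Yk mult.assoc)
  also have "\<dots> = Y * (\<psi> * Y ^ m)" by (simp only: p(2), simp only: mult.assoc)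
  finally have "\<phi> * phiH W k 0 * Y ^ k = Y * (\<psi> * Y ^ m)" .
  moreover have "inY (Y * (\<psi> * Y ^ m))"
    using p(1) by (intro inY_Y Agen.gen_mult HRat_Agen Agen_pow Agen_Y)
  ultimately show "dsummand W \<phi> a k \<in> II W" by (intro dsY a) simp
qed (simp add: ds0 II_0)

lemma claim8: assumes a: "a \<in> Agen W" and ph: "\<phi> \<in> HRat W"
  shows "diamond_eq W a \<phi> (a * \<phi>)"
proof (rule diamond_intro[of 1])
  fix k :: nat assume "k \<ge> 1"
  then obtain m where k: "k = Suc m" by (cases k) auto
  obtain \<psi> where p: "\<psi> \<in> HRat W" "X * \<phi> = \<psi> * X"
    using shift_HRat_left[OF shifts_X ph] by blast
  have "X ^ k * \<phi> = X ^ m * (X * \<phi>)" by (simp only: k power_Suc2 mult.assoc)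
  also have "\<dots> = (X ^ m * \<psi>) * X" by (simp only: p(2) mult.assoc)
  finally have "X ^ k * \<phi> = (X ^ m * \<psi>) * X" .
  then show "dsummand W a \<phi> k \<in> II W"
    using p(1) by (intro dsX a) (simp add: inX_X Agen.gen_mult HRat_Agen Agen_pow Agen_X)
qed (simp add: ds0 II_0)


lemmas AG = Agen.gen_mult Agen.gen_add Agen_diff Agen_neg Agen.gen_sc Agen_c Agen_X Agen_Y Agen_dup
  Agen_glow Agen_xlow Agen_phiH Agen_pow Agen.gen_x Agen.gen_d Agen.gen_g

lemma gY2: assumes i: "i < dim W" shows "inY (gv W i * Y ^ Suc (Suc m))"
proof -
  have "gv W i * Y ^ Suc (Suc m) = (gv W i * Y) * (Y * Y ^ m)" by (simp add: mult.assoc)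
  also have "\<dots> = (c2 * xv W i - Y * gv W i) * (Y * Y ^ m)" by (simp only: g_Y'[OF i])
  also have "\<dots> = c2 * (xv W i * (Y * Y ^ m)) - Y * (gv W i * (Y * Y ^ m))"
    by (simp add: left_diff_distrib mult.assoc)
  finally show ?thesis using i
    by (simp only:) (intro inY_diff inY_sc isc_facts inY_x inY_Y AG)
qed

lemma g_ds_big: assumes i: "i < dim W" and b: "b \<in> Agen W" and k: "k \<ge> 2"
  shows "dsummand W (gv W i) b k \<in> II W"
proof -
  define m where "m = k - 2"
  have m: "k = Suc (Suc m)" using k by (simp add: m_def)
  have c: "gv W i * phiH W k 0 = phiH W k 0 * gv W i"
    using comm_g_phiH[OF i, of k 0] by (simp add: comm_def)
  have "gv W i * phiH W k 0 * Y ^ k = phiH W k 0 * (gv W i * Y ^ k)"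
    by (simp only: c, simp only: mult.assoc)
  moreover have "inY (phiH W k 0 * (gv W i * Y ^ k))"
    unfolding m by (intro inY_HRat phiH_HRat gY2 i)
  ultimately show ?thesis by (intro dsY b) simp
qed

lemma dY2: assumes i: "i < dim W"
  shows "dv W i * (Y * Y) = Y * (dv W i * Y - c1 * glow W i) - xlow W i"
proof -
  have "dv W i * (Y * Y) = (dv W i * Y) * Y" by (simp only: mult.assoc)
  also have "\<dots> = (Y * dv W i + c1 * glow W i) * Y" by (simp only: d_Y'[OF i])
  also have "\<dots> = Y * (dv W i * Y) + c1 * (glow W i * Y)" by (simp only: distrib_right mult.assoc)
  also have "\<dots> = Y * (dv W i * Y) + c1 * (c2 * xlow W i - Y * glow W i)" by (simp only: glow_Y'[OF i])
  also have "\<dots> = Y * (dv W i * Y - c1 * glow W i) - xlow W i" by (simp add: N)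
  finally show ?thesis .
qed

lemma dY3: assumes i: "i < dim W" shows "inY (dv W i * Y ^ Suc (Suc (Suc m)))"
proof -
  have "dv W i * Y ^ Suc (Suc (Suc m)) = (dv W i * (Y * Y)) * (Y * Y ^ m)" by (simp add: mult.assoc)
  also have "\<dots> = (Y * (dv W i * Y - c1 * glow W i) - xlow W i) * (Y * Y ^ m)" by (simp only: dY2[OF i])
  also have "\<dots> = Y * ((dv W i * Y - c1 * glow W i) * (Y * Y ^ m)) - xlow W i * (Y * Y ^ m)"
    by (simp add: left_diff_distrib mult.assoc)
  finally show ?thesis using i
    by (simp only:) (intro inY_diff inY_xlow inY_Y AG)
qed

lemma d_ds_big: assumes i: "i < dim W" and b: "b \<in> Agen W" and k: "k \<ge> 3"
  shows "dsummand W (dv W i) b k \<in> II W"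
proof -
  define m where "m = k - 3"
  have m: "k = Suc (Suc (Suc m))" using k by (simp add: m_def)
  have "dv W i * phiH W k 0 * Y ^ k = phiH W k (-1) * (dv W i * Y ^ k)"
    using shift_phiH[OF shifts_d[OF i], of k 0] by (simp add: mult.assoc)
  moreover have "inY (phiH W k (-1) * (dv W i * Y ^ k))"
    unfolding m by (intro inY_HRat phiH_HRat dY3 i)
  ultimately show ?thesis by (intro dsY b) simp
qed

lemma X_g2: assumes j: "j < dim W" shows "inX (X ^ Suc (Suc m) * gv W j)"
proof -
  have "X ^ Suc (Suc m) * gv W j = X ^ m * (X * (X * gv W j))" by (simp only: power_Suc2 mult.assoc)
  also have "\<dots> = X ^ m * (X * (c2 * dup W j - gv W j * X))" by (simp only: X_g'[OF j])
  also have "\<dots> = (c2 * (X ^ m * dup W j) - X ^ m * (X * gv W j)) * X"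
    using comm_dup_X[of j] by (simp add: N comm_def)
  finally show ?thesis using j by (simp only:) (intro inX_X AG)
qed

lemma X2x: assumes j: "j < dim W" shows "X * (X * xv W j) = xv W j * (X * X) - dup W j"
proof -
  have "X * (X * xv W j) = X * (xv W j * X + c1 * gv W j)" by (simp only: X_x'[OF j])
  also have "\<dots> = (X * xv W j) * X + c1 * (X * gv W j)" by (simp add: distrib_left mult.assoc pull isc_facts nonsc_facts)
  also have "\<dots> = (xv W j * X + c1 * gv W j) * X + c1 * (c2 * dup W j - gv W j * X)"
    by (simp only: X_x'[OF j] X_g'[OF j])
  also have "\<dots> = xv W j * (X * X) - dup W j" by (simp add: N)
  finally show ?thesis .
qed

lemma ds1_g: assumes i: "i < dim W"
  shows "dsummand W (gv W i) b 1 = phiH W 1 0 * (gv W i * Y) * (X * b)"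
proof -
  have c: "gv W i * phiH W 1 0 = phiH W 1 0 * gv W i" using comm_g_phiH[OF i, of 1 0] by (simp add: comm_def)
  have "dsummand W (gv W i) b 1 = gv W i * phiH W 1 0 * Y * X * b" by (simp add: dsummand_def)
  also have "\<dots> = phiH W 1 0 * gv W i * Y * X * b" by (simp only: c)
  finally show ?thesis by (simp only: mult.assoc)
qed

lemma ds1_d: assumes i: "i < dim W"
  shows "dsummand W (dv W i) b 1 = phiH W 1 (-1) * (dv W i * Y) * (X * b)"
proof -
  have c: "dv W i * phiH W 1 0 = phiH W 1 (-1) * dv W i" using shift_phiH[OF shifts_d[OF i], of 1 0] by simp
  have "dsummand W (dv W i) b 1 = dv W i * phiH W 1 0 * Y * X * b" by (simp add: dsummand_def)
  also have "\<dots> = phiH W 1 (-1) * dv W i * Y * X * b" by (simp only: c)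
  finally show ?thesis by (simp only: mult.assoc)
qed

lemma ds2_d: assumes i: "i < dim W"
  shows "dsummand W (dv W i) b 2 = phiH W 2 (-1) * (dv W i * (Y * Y)) * (X * (X * b))"
proof -
  have c: "dv W i * phiH W 2 0 = phiH W 2 (-1) * dv W i" using shift_phiH[OF shifts_d[OF i], of 2 0] by simp
  have "dsummand W (dv W i) b 2 = dv W i * phiH W 2 0 * (Y * Y) * (X * X) * b"
    by (simp add: dsummand_def power2_eq_square)
  also have "\<dots> = phiH W 2 (-1) * dv W i * (Y * Y) * (X * X) * b" by (simp only: c)
  finally show ?thesis by (simp only: mult.assoc)
qed


lemma claim4: assumes i: "i < dim W" and j: "j < dim W"
  shows "diamond_eq W (gv W i) (gv W j) (gv W i * gv W j - s 2 * phiH W 1 0 * xv W i * dup W j)"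
proof (rule diamond_intro[of 2])
  fix k :: nat assume "k \<ge> 2"
  then show "dsummand W (gv W i) (gv W j) k \<in> II W" using i j by (intro g_ds_big AG)
next
  have D: "dsummand W (gv W i) (gv W j) 1
      = phiH W 1 0 * (c2 * xv W i - Y * gv W i) * (c2 * dup W j - gv W j * X)"
    by (simp only: ds1_g[OF i] g_Y'[OF i] X_g'[OF j])
  have "dsummand W (gv W i) (gv W j) 0 + dsummand W (gv W i) (gv W j) 1
      - (gv W i * gv W j - s 2 * phiH W 1 0 * xv W i * dup W j)
      = (- (c2 * (phiH W 1 0 * (xv W i * gv W j)))) * X
        + phiH W 1 0 * (Y * (gv W i * (gv W j * X) - c2 * (gv W i * dup W j)))"
    by (simp only: ds0 D) (simp add: N del: phiH.simps)
  moreover have "\<dots> \<in> II W" using i j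
    by (intro II_add inX_II inY_II inX_X inY_HRat phiH_HRat inY_Y AG)
  ultimately show "(\<Sum>k<2. dsummand W (gv W i) (gv W j) k)
      - (gv W i * gv W j - s 2 * phiH W 1 0 * xv W i * dup W j) \<in> II W"
    by (simp add: sum2)
qed

lemma claim6: assumes i: "i < dim W" and j: "j < dim W"
  shows "diamond_eq W (gv W i) (xv W j) (gv W i * xv W j - phiH W 1 0 * xv W i * gv W j)"
proof (rule diamond_intro[of 2])
  fix k :: nat assume "k \<ge> 2"
  then show "dsummand W (gv W i) (xv W j) k \<in> II W" using i j by (intro g_ds_big AG)
next
  have D: "dsummand W (gv W i) (xv W j) 1
      = phiH W 1 0 * (c2 * xv W i - Y * gv W i) * (xv W j * X + c1 * gv W j)"
    by (simp only: ds1_g[OF i] g_Y'[OF i] X_x'[OF j])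
  have "dsummand W (gv W i) (xv W j) 0 + dsummand W (gv W i) (xv W j) 1
      - (gv W i * xv W j - phiH W 1 0 * xv W i * gv W j)
      = (c2 * (phiH W 1 0 * (xv W i * xv W j))) * X
        - phiH W 1 0 * (Y * (gv W i * (xv W j * X + c1 * gv W j)))"
    by (simp only: ds0 D) (simp add: N del: phiH.simps)
  moreover have "\<dots> \<in> II W" using i j
    by (intro II_diff inX_II inY_II inX_X inY_HRat phiH_HRat inY_Y AG)
  ultimately show "(\<Sum>k<2. dsummand W (gv W i) (xv W j) k)
      - (gv W i * xv W j - phiH W 1 0 * xv W i * gv W j) \<in> II W"
    by (simp add: sum2)
qed

lemma claim3: assumes i: "i < dim W" and j: "j < dim W"
  shows "diamond_eq W (dv W i) (gv W j) (dv W i * gv W j - phiH W 1 (-1) * glow W i * dup W j)"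
proof (rule diamond_intro[of 2])
  fix k :: nat assume k: "k \<ge> 2"
  define m where "m = k - 2"
  have m: "k = Suc (Suc m)" using k by (simp add: m_def)
  show "dsummand W (dv W i) (gv W j) k \<in> II W"
    using i j unfolding m by (intro dsX AG X_g2)
next
  have D: "dsummand W (dv W i) (gv W j) 1
      = phiH W 1 (-1) * (Y * dv W i + c1 * glow W i) * (c2 * dup W j - gv W j * X)"
    by (simp only: ds1_d[OF i] d_Y'[OF i] X_g'[OF j])
  have "dsummand W (dv W i) (gv W j) 0 + dsummand W (dv W i) (gv W j) 1
      - (dv W i * gv W j - phiH W 1 (-1) * glow W i * dup W j)
      = phiH W 1 (-1) * (Y * (dv W i * (c2 * dup W j - gv W j * X)))
        - (c1 * (phiH W 1 (-1) * (glow W i * gv W j))) * X"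
    by (simp only: ds0 D) (simp add: N del: phiH.simps)
  moreover have "\<dots> \<in> II W" using i j
    by (intro II_diff inX_II inY_II inX_X inY_HRat phiH_HRat inY_Y AG)
  ultimately show "(\<Sum>k<2. dsummand W (dv W i) (gv W j) k)
      - (dv W i * gv W j - phiH W 1 (-1) * glow W i * dup W j) \<in> II W"
    by (simp add: sum2)
qed

lemma claim5: assumes i: "i < dim W" and j: "j < dim W"
  shows "diamond_eq W (dv W i) (xv W j)
        (dv W i * xv W j - s (1/2) * phiH W 1 (-1) * glow W i * gv W j
           + phiH W 2 (-1) * xlow W i * dup W j)"
proof (rule diamond_intro[of 3])
  fix k :: nat assume "k \<ge> 3"
  then show "dsummand W (dv W i) (xv W j) k \<in> II W" using i j by (intro d_ds_big AG)
next
  have D1: "dsummand W (dv W i) (xv W j) 1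
      = phiH W 1 (-1) * (Y * dv W i + c1 * glow W i) * (xv W j * X + c1 * gv W j)"
    by (simp only: ds1_d[OF i] d_Y'[OF i] X_x'[OF j])
  have D2: "dsummand W (dv W i) (xv W j) 2
      = phiH W 2 (-1) * (Y * (dv W i * Y - c1 * glow W i) - xlow W i) * (xv W j * (X * X) - dup W j)"
    by (simp only: ds2_d[OF i] dY2[OF i] X2x[OF j])
  have "dsummand W (dv W i) (xv W j) 0 + dsummand W (dv W i) (xv W j) 1 + dsummand W (dv W i) (xv W j) 2
      - (dv W i * xv W j - s (1/2) * phiH W 1 (-1) * glow W i * gv W j
           + phiH W 2 (-1) * xlow W i * dup W j)
      = phiH W 1 (-1) * (Y * (dv W i * (xv W j * X + c1 * gv W j)))
        + (c1 * (phiH W 1 (-1) * (glow W i * xv W j))) * X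
        + phiH W 2 (-1) * (Y * ((dv W i * Y - c1 * glow W i) * (xv W j * (X * X) - dup W j)))
        - (phiH W 2 (-1) * (xlow W i * xv W j) * X) * X"
    by (simp only: ds0 D1 D2) (simp add: N del: phiH.simps)
  moreover have "\<dots> \<in> II W" using i j
    by (intro II_diff II_add inX_II inY_II inX_X inY_HRat phiH_HRat inY_Y AG)
  ultimately show "(\<Sum>k<3. dsummand W (dv W i) (xv W j) k)
      - (dv W i * xv W j - s (1/2) * phiH W 1 (-1) * glow W i * gv W j
           + phiH W 2 (-1) * xlow W i * dup W j) \<in> II W"
    by (simp add: sum3)
qed

end

theorem proposition4p1:
  fixes W :: "('a::ring_1, 'b) WC_scheme"
  assumes n1: "dim W \<ge> 1"
    and eta_sym: "\<forall>i<dim W. \<forall>j<dim W. eta W i j = eta W j i"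
    and eta_inv1: "\<forall>i<dim W. \<forall>k<dim W. (\<Sum>j<dim W. eta W i j * etai W j k) = (if i = k then 1 else 0)"
    and eta_inv2: "\<forall>i<dim W. \<forall>k<dim W. (\<Sum>j<dim W. etai W i j * eta W j k) = (if i = k then 1 else 0)"
    and alg: "WC_alg W"
  shows "\<forall>a\<in>Agen W. \<forall>i<dim W. \<forall>j<dim W. \<forall>\<phi>\<in>HRat W.
     diamond_eq W a (dv W j) (a * dv W j) \<and>
     diamond_eq W (xv W i) a (xv W i * a) \<and>
     diamond_eq W (dv W i) (gv W j)
        (dv W i * gv W j - phiH W 1 (-1) * glow W i * dup W j) \<and>
     diamond_eq W (gv W i) (gv W j)
        (gv W i * gv W j - sc W 2 * phiH W 1 0 * xv W i * dup W j) \<and>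
     diamond_eq W (dv W i) (xv W j)
        (dv W i * xv W j - sc W (1/2) * phiH W 1 (-1) * glow W i * gv W j
           + phiH W 2 (-1) * xlow W i * dup W j) \<and>
     diamond_eq W (gv W i) (xv W j)
        (gv W i * xv W j - phiH W 1 0 * xv W i * gv W j) \<and>
     diamond_eq W \<phi> a (\<phi> * a) \<and>
     diamond_eq W a \<phi> (a * \<phi>)"
proof -
  interpret wc W using eta_sym eta_inv1 eta_inv2 alg by unfold_locales
  show ?thesis
    by (intro ballI allI impI conjI)
       (blast intro: claim1 claim2 claim3 claim4 claim5 claim6 claim7 claim8)+
qed

end
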